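(* Let $n \geq 1$, $r \geq 1$, $k \geq 0$ be integers, and suppose that either (1) $n \geq 3r^2 + 100$, $r \geq 2$, and $k \leq 4r$; or (2) $k \leq \frac{n}{\ln(n+1) + 1} - r$. Then \[E_r(n,k) \geq 0.6 \binom{k+r-1}{r-1}(k+r)^n.\]
   Context: The $r$th order Eulerian number $E_r(n,k)$ is the number of pairs $(w, S)$ with $w$ a permutation of $\{1, \ldots, n\}$ and $S \subset \{1, \ldots, n-1\}$ of size $r-1$ such that exactly $k$ indices $i \in \{1,\ldots,n-1\} \setminus S$ satisfy $w(i) > w(i+1)$. *)

theory Defs
  imports "HOL-Analysis.Analysis" "HOL-Combinatorics.Combinatorics"
begin

definition descents_outside :: "nat \<Rightarrow> (nat \<Rightarrow> nat) \<Rightarrow> nat set \<Rightarrow> nat set" where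
  "descents_outside n w S = {i \<in> {1..n-1} - S. w i > w (i+1)}"

definition eulerian_r :: "nat \<Rightarrow> nat \<Rightarrow> nat \<Rightarrow> nat" where
  "eulerian_r r n k = card {(w, S). w permutes {1..n} \<and> S \<subseteq> {1..n-1} \<and> card S = r - 1
        \<and> card (descents_outside n w S) = k}"

end

theory Submission
  imports Defs
begin

lemma e271: "exp (1::real) \<ge> 2.71"
proof -
  have "\<bar>exp 1 - 5837465777 / 2147483648\<bar> \<le> (inverse(2 ^ 32)::real)" by (rule e_approx_32)
  then have "exp 1 - 5837465777 / 2147483648 \<ge> - (inverse(2 ^ 32)::real)" by linarith
  then show ?thesis by simp
qed

lemma exp5_ge: "exp (5::real) \<ge> 146"
proof -
  have e: "exp (1::real) \<ge> 2.71" by (rule e271)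
  have "exp (5::real) = exp 1 ^ 5" by (simp add: exp_of_nat_mult[symmetric])
  also have "\<dots> \<ge> 2.71 ^ 5" using e by (intro power_mono) auto
  finally have "(2.71::real)^5 \<le> exp 5" .
  moreover have "(146::real) \<le> 2.71^5" by (simp add: eval_nat_numeral)
  ultimately show ?thesis by linarith
qed

lemma case1_bound:
  fixes n r :: nat
  assumes "n \<ge> 3 * r^2 + 100" "r \<ge> 1"
  shows "5 * real r * (ln (real n + 1) + 1) \<le> real n"
proof -
  define x where "x = real n"
  define y where "y = real r"
  have y1: "y \<ge> 1" using assms(2) by (simp add: y_def)
  have "real (3 * r^2 + 100) \<le> real n" using assms(1) by (simp only: of_nat_le_iff)
  then have xb: "x \<ge> 3 * y^2 + 100" unfolding x_def y_def by simp
  have x0: "x \<ge> 0" unfolding x_def by simp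
  have l1: "ln ((x+1)/(20*y)) \<le> (x+1)/(20*y) - 1"
    by (rule ln_le_minus_one) (use y1 x0 in auto)
  have l1': "ln ((x+1)/(20*y)) = ln (x+1) - ln (20*y)"
    using y1 x0 by (subst ln_div) auto
  have l2: "ln ((20*y)/exp 5) \<le> (20*y)/exp 5 - 1"
    by (rule ln_le_minus_one) (use y1 in auto)
  have l2': "ln ((20*y)/exp 5) = ln (20*y) - 5"
    using y1 by (subst ln_div) auto
  have e5: "(20*y)/exp 5 \<le> 20*y/146"
    using exp5_ge y1 by (intro divide_left_mono) auto
  have L: "ln (x+1) \<le> (x+1)/(20*y) + 20*y/146 + 3"
    using l1 l1' l2 l2' e5 by linarith
  have "5*y*(ln (x+1) + 1) \<le> 5*y*((x+1)/(20*y) + 20*y/146 + 4)"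
    using L y1 by (intro mult_left_mono) auto
  also have "\<dots> = (x+1)/4 + 100*y^2/146 + 20*y"
    using y1 by (simp add: field_simps power2_eq_square)
  also have "\<dots> \<le> x"
  proof -
    have "0 \<le> (1565/1000)*(y-64/10)^2" by simp
    also have "(1565/1000)*(y-64/10)^2 = (1565/1000)*y^2 - (20032/1000)*y + 641024/10000"
      by (simp add: power2_eq_square algebra_simps)
    finally have q: "0 \<le> (1565/1000)*y^2 - (20032/1000)*y + 641024/10000" .
    have "y^2 \<ge> 0" by simp
    have "100*y^2/146 = (100/146)*y^2" "(x+1)/4 = x/4 + 1/4" by simp_all
    then show ?thesis using q xb y1 `y^2 \<ge> 0` by linarith
  qed
  finally show ?thesis by (simp add: x_def y_def)
qed

lemma main_analytic:
  fixes n m :: nat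
  assumes "n \<ge> 1" "real (m+1) * (ln (real n + 1) + 1) \<le> real n"
  shows "real (n+1) * real m ^ n \<le> 0.4 * real (m+1) ^ n"
proof (cases "m = 0")
  case True then show ?thesis using assms(1) by (simp add: power_0_left)
next
  case False
  define q where "q = real m / real (m+1)"
  have q0: "q > 0" using False by (simp add: q_def)
  have lq: "ln q \<le> - 1 / real (m+1)"
    using ln_le_minus_one[OF q0] by (simp add: q_def field_simps)
  have "real n * ln q \<le> real n * (- 1 / real (m+1))"
    using lq by (intro mult_left_mono) auto
  also have "\<dots> \<le> - (ln (real n + 1) + 1)"
    using assms(2) by (simp add: field_simps)
  finally have A: "real n * ln q \<le> - (ln (real n + 1) + 1)" .
  have "q ^ n = exp (real n * ln q)" using q0 by (simp add: exp_of_nat_mult)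
  also have "\<dots> \<le> exp (- (ln (real n + 1) + 1))" using A by simp
  also have "\<dots> = exp (-1) / (real n + 1)"
    by (simp add: exp_diff exp_minus field_simps)
  finally have B: "q ^ n \<le> exp (-1) / (real n + 1)" .
  have e: "exp (-1::real) \<le> 0.4"
  proof -
    have "exp (1::real) \<ge> 2.71" by (rule e271)
    then show ?thesis by (simp add: exp_minus field_simps)
  qed
  have "real (n+1) * q ^ n \<le> 0.4"
    using B e by (simp add: field_simps)
  then have "real (n+1) * (real m ^ n / real (m+1) ^ n) \<le> 0.4"
    by (simp add: q_def power_divide)
  then show ?thesis by (simp add: field_simps)
qed

definition keyf :: "nat \<Rightarrow> (nat \<Rightarrow> nat) \<Rightarrow> nat \<Rightarrow> nat" where
  "keyf n f x = Suc n * f x + x"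
definition srt :: "nat \<Rightarrow> (nat \<Rightarrow> nat) \<Rightarrow> nat list" where
  "srt n f = sort_key (keyf n f) [1..<Suc n]"
lemma keyf_mono:
  assumes "x \<le> n" "f x < f y"
  shows "keyf n f x < keyf n f y"
proof -
  have a: "keyf n f x \<le> Suc n * f x + n" using assms(1) by (simp add: keyf_def)
  have "Suc n * (f x + 1) \<le> Suc n * f y" using assms(2) by (intro mult_le_mono2) simp
  then have b: "Suc n * f x + Suc n \<le> Suc n * f y" by (simp only: distrib_left mult_1_right)
  have c: "Suc n * f y \<le> keyf n f y" by (simp add: keyf_def)
  show ?thesis using a b c by linarith
qed

lemma keyf_inj:
  assumes "x \<le> n" "y \<le> n" "keyf n f x = keyf n f y"
  shows "x = y"
proof -
  have "\<not> f x < f y" using keyf_mono[of x n f y] assms(1,3) by auto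
  moreover have "\<not> f y < f x" using keyf_mono[of y n f x] assms(2,3) by auto
  ultimately have "f x = f y" by simp
  then show ?thesis using assms(3) by (simp add: keyf_def)
qed

lemma keyf_less:
  assumes "x \<le> n" "y \<le> n" "keyf n f x < keyf n f y"
  shows "f x \<le> f y \<and> (f x = f y \<longrightarrow> x < y)"
proof
  have a: "Suc n * f x \<le> keyf n f x" by (simp add: keyf_def)
  have b: "keyf n f y \<le> Suc n * f y + n" using assms(2) by (simp add: keyf_def)
  have c: "Suc n * (f y + 1) = Suc n * f y + Suc n" by (simp only: distrib_left mult_1_right)
  have "Suc n * f x < Suc n * (f y + 1)" using a b c assms(3) by linarith
  then have "f x < f y + 1" by (simp only: mult_less_cancel1)
  then show "f x \<le> f y" by simp
  show "f x = f y \<longrightarrow> x < y" using assms(3) by (auto simp add: keyf_def)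
qed

lemma srt_props:
  "length (srt n f) = n" "set (srt n f) = {1..n}" "distinct (srt n f)"
  "sorted (map (keyf n f) (srt n f))"
  by (auto simp: srt_def)
definition wsort :: "nat \<Rightarrow> (nat \<Rightarrow> nat) \<Rightarrow> nat \<Rightarrow> nat" where
  "wsort n f i = (if i \<in> {1..n} then srt n f ! (i - 1) else i)"

lemma wsort_in: "i \<in> {1..n} \<Longrightarrow> wsort n f i \<in> {1..n}"
proof -
  assume i: "i \<in> {1..n}"
  then have "srt n f ! (i - 1) \<in> set (srt n f)" using srt_props(1)[of n f] by auto
  then show ?thesis using i srt_props(2) by (simp add: wsort_def)
qed

lemma wsort_permutes: "wsort n f permutes {1..n}"
proof (rule bij_imp_permutes)
  have inj: "inj_on (wsort n f) {1..n}"
  proof (rule inj_onI)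
    fix i j assume i: "i \<in> {1..n}" and j: "j \<in> {1..n}" and e: "wsort n f i = wsort n f j"
    then have "srt n f ! (i - 1) = srt n f ! (j - 1)" by (simp add: wsort_def)
    then have "i - 1 = j - 1" using i j srt_props(1,3)[of n f] nth_eq_iff_index_eq by fastforce
    then show "i = j" using i j by auto
  qed
  have "wsort n f ` {1..n} \<subseteq> {1..n}" using wsort_in by auto
  moreover have "card (wsort n f ` {1..n}) = n" using card_image[OF inj] by simp
  ultimately have "wsort n f ` {1..n} = {1..n}"
    by (metis card_atLeastAtMost card_subset_eq diff_Suc_1 finite_atLeastAtMost)
  then show "bij_betw (wsort n f) {1..n} {1..n}" using inj by (simp add: bij_betw_def)
  show "\<And>x. x \<notin> {1..n} \<Longrightarrow> wsort n f x = x" by (auto simp add: wsort_def)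
qed

lemma wsort_strict:
  assumes "i \<in> {1..n}" "j \<in> {1..n}" "i < j"
  shows "keyf n f (wsort n f i) < keyf n f (wsort n f j)"
proof -
  let ?xs = "srt n f"
  have le: "keyf n f (?xs ! (i-1)) \<le> keyf n f (?xs ! (j-1))"
    using sorted_nth_mono[OF srt_props(4)[of n f], of "i-1" "j-1"] assms srt_props(1)[of n f]
    by auto
  have ne: "?xs ! (i-1) \<noteq> ?xs ! (j-1)"
    using assms srt_props(1,3)[of n f] nth_eq_iff_index_eq by fastforce
  have "?xs ! (i-1) \<in> {1..n}" "?xs ! (j-1) \<in> {1..n}"
    using assms srt_props(1,2)[of n f] nth_mem[of "i-1" ?xs] nth_mem[of "j-1" ?xs] by auto
  then have "keyf n f (?xs ! (i-1)) \<noteq> keyf n f (?xs ! (j-1))"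
    using keyf_inj ne by auto
  then show ?thesis using le assms by (simp add: wsort_def)
qed

lemma insort_key_cong:
  "(\<And>y. y \<in> set ys \<Longrightarrow> (k x \<le> k y) = (k' x \<le> k' y)) \<Longrightarrow> insort_key k x ys = insort_key k' x ys"
  by (induction ys) auto

lemma sort_key_cong:
  "(\<And>x y. x \<in> set xs \<Longrightarrow> y \<in> set xs \<Longrightarrow> (k x \<le> k y) = (k' x \<le> k' y)) \<Longrightarrow> sort_key k xs = sort_key k' xs"
proof (induction xs)
  case Nil then show ?case by simp
next
  case (Cons a xs)
  have "sort_key k xs = sort_key k' xs" using Cons by auto
  moreover have "insort_key k a (sort_key k' xs) = insort_key k' a (sort_key k' xs)"
    by (rule insort_key_cong) (use Cons.prems in auto)
  ultimately show ?case by simp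
qed

lemma wsort_cong:
  assumes "\<And>x y. x \<in> {1..n} \<Longrightarrow> y \<in> {1..n} \<Longrightarrow> (keyf n f x \<le> keyf n f y) = (keyf n g x \<le> keyf n g y)"
  shows "wsort n f = wsort n g"
proof -
  have "srt n f = srt n g" unfolding srt_def
    by (rule sort_key_cong) (use assms in auto)
  then show ?thesis by (simp add: wsort_def fun_eq_iff)
qed

lemma keyf_lessI:
  assumes "x \<le> n" "1 \<le> y" "h x < h y \<or> (h x = h y \<and> x < y)"
  shows "keyf n h x < keyf n h y"
  using assms(3)
proof
  assume "h x < h y" then show ?thesis using keyf_mono[of x n h y] assms(1) by simp
next
  assume "h x = h y \<and> x < y" then show ?thesis by (simp add: keyf_def)
qed

lemma wsort_inj: "inj (wsort n f)"
  using wsort_permutes permutes_inj by blast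

lemma wsort_image: "wsort n f ` {1..n} = {1..n}"
  using wsort_permutes permutes_image by blast

lemma a_rel:
  assumes "i \<in> {1..n}" "j \<in> {1..n}" "i < j"
  shows "f (wsort n f i) \<le> f (wsort n f j) \<and>
         (f (wsort n f i) = f (wsort n f j) \<longrightarrow> wsort n f i < wsort n f j)"
  using keyf_less[OF _ _ wsort_strict[OF assms]] wsort_in[OF assms(1), of f] wsort_in[OF assms(2), of f]
  by auto

lemma a_mono:
  assumes "i \<in> {1..n}" "j \<in> {1..n}" "i \<le> j"
  shows "f (wsort n f i) \<le> f (wsort n f j)"
  using a_rel[OF assms(1,2)] assms(3) by (cases "i = j") auto

lemma a_eq_le:
  assumes "i \<in> {1..n}" "j \<in> {1..n}" "i \<le> j" "f (wsort n f i) = f (wsort n f j)"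
  shows "wsort n f i \<le> wsort n f j"
  using a_rel[OF assms(1,2), of f] assms(3,4) by (cases "i = j") auto

lemma a_desc:
  assumes "1 \<le> i" "i < n" "wsort n f (Suc i) < wsort n f i"
  shows "f (wsort n f i) < f (wsort n f (Suc i))"
  using a_rel[of i n "Suc i" f] assms by auto

definition defect :: "nat \<Rightarrow> nat \<Rightarrow> (nat \<Rightarrow> nat) \<Rightarrow> nat \<Rightarrow> bool" where
  "defect n m f c \<longleftrightarrow>
     (c = 0 \<and> 0 < f (wsort n f 1)) \<or> (c = n \<and> f (wsort n f n) < m) \<or>
     (0 < c \<and> c < n \<and> f (wsort n f c) + (if wsort n f (Suc c) < wsort n f c then 1 else 0)
        < f (wsort n f (Suc c)))"

lemma good_val:
  assumes nd: "\<forall>c\<le>n. \<not> defect n m f c"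
  shows "1 \<le> i \<Longrightarrow> i \<le> n \<Longrightarrow> f (wsort n f i) = card {j \<in> {1..<i}. wsort n f (Suc j) < wsort n f j}"
proof (induction i)
  case 0 then show ?case by simp
next
  case (Suc i)
  show ?case
  proof (cases "i = 0")
    case True
    then have "\<not> defect n m f 0" using nd by auto
    then have "f (wsort n f 1) = 0" by (simp add: defect_def)
    then show ?thesis using True by simp
  next
    case False
    let ?w = "wsort n f"
    have i1: "1 \<le> i" "i < n" using False Suc.prems by auto
    have IH: "f (?w i) = card {j \<in> {1..<i}. ?w (Suc j) < ?w j}" using Suc.IH i1 by simp
    have "\<not> defect n m f i" using nd i1 by auto
    then have le: "f (?w (Suc i)) \<le> f (?w i) + (if ?w (Suc i) < ?w i then 1 else 0)"
      using i1 by (auto simp add: defect_def)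
    have ge: "f (?w i) + (if ?w (Suc i) < ?w i then 1 else 0) \<le> f (?w (Suc i))"
      using a_mono[of i n "Suc i" f] a_desc[of i n f] i1 by (auto split: if_splits)
    have set: "{j \<in> {1..<Suc i}. ?w (Suc j) < ?w j} =
       {j \<in> {1..<i}. ?w (Suc j) < ?w j} \<union> (if ?w (Suc i) < ?w i then {i} else {})"
      using i1 by (cases "?w (Suc i) < ?w i") (auto simp: less_Suc_eq)
    have "card {j \<in> {1..<Suc i}. ?w (Suc j) < ?w j} =
       card {j \<in> {1..<i}. ?w (Suc j) < ?w j} + (if ?w (Suc i) < ?w i then 1 else 0)"
      unfolding set by (auto simp: card_insert_if)
    then show ?thesis using le ge IH by simp
  qed
qed

lemma desc_set: "descents_outside n w {} = {j \<in> {1..<n}. w (Suc j) < w j}"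
proof -
  have e: "\<And>i. (i \<in> {1..n-1} - {}) = (i \<in> {1..<n})" by auto
  show ?thesis unfolding descents_outside_def e by simp
qed

lemma good_des:
  assumes nd: "\<forall>c\<le>n. \<not> defect n m f c" and n1: "1 \<le> n"
    and F: "\<forall>x\<in>{1..n}. f x \<le> m"
  shows "card (descents_outside n (wsort n f) {}) = m"
proof -
  have "\<not> defect n m f n" using nd by auto
  then have "m \<le> f (wsort n f n)" using n1 by (auto simp add: defect_def)
  moreover have "f (wsort n f n) \<le> m" using F wsort_in[of n n f] n1 by auto
  ultimately have "f (wsort n f n) = m" by simp
  then show ?thesis using good_val[OF nd, of n] n1 desc_set by simp
qed

lemma good_inj:
  assumes "\<forall>c\<le>n. \<not> defect n m f c" "\<forall>c\<le>n. \<not> defect n m g c"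
    and "f \<in> extensional {1..n}" "g \<in> extensional {1..n}"
    and "wsort n f = wsort n g"
  shows "f = g"
proof (rule extensionalityI[OF assms(3,4)])
  fix x assume x: "x \<in> {1..n}"
  then obtain i where i: "i \<in> {1..n}" "x = wsort n f i" using wsort_image[of n f] by (metis imageE)
  have "f (wsort n f i) = g (wsort n g i)"
    using good_val[OF assms(1), of i] good_val[OF assms(2), of i] i assms(5) by simp
  then show "f x = g x" using i assms(5) by simp
qed

definition red :: "nat \<Rightarrow> (nat \<Rightarrow> nat) \<Rightarrow> nat \<Rightarrow> nat \<Rightarrow> nat" where
  "red n f c x = (if x \<in> {1..n} then f x - (if x \<in> wsort n f ` {Suc c..n} then 1 else 0) else undefined)"

lemma red_at:
  assumes "i \<in> {1..n}"
  shows "red n f c (wsort n f i) = f (wsort n f i) - (if c < i then 1 else 0)"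
proof -
  have "(wsort n f i \<in> wsort n f ` {Suc c..n}) = (i \<in> {Suc c..n})"
    by (rule inj_image_mem_iff[OF wsort_inj])
  then show ?thesis using assms wsort_in[OF assms, of f] by (auto simp: red_def)
qed

lemma P1:
  assumes d: "defect n m f c" and "c < i" "i \<in> {1..n}"
  shows "1 \<le> f (wsort n f i)"
proof -
  consider (z) "c = 0 \<and> 0 < f (wsort n f 1)" | (l) "c = n \<and> f (wsort n f n) < m" |
    (mid) "0 < c \<and> c < n \<and> f (wsort n f c) + (if wsort n f (Suc c) < wsort n f c then 1 else 0)
        < f (wsort n f (Suc c))"
    using d unfolding defect_def by blast
  then show ?thesis
  proof cases
    case z
    then show ?thesis using a_mono[of 1 n i f] assms by auto
  next
    case l then show ?thesis using assms by auto
  next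
    case mid
    then have "1 \<le> f (wsort n f (Suc c))" by linarith
    then show ?thesis using a_mono[of "Suc c" n i f] assms mid by auto
  qed
qed

lemma P2:
  assumes d: "defect n m f c" and "i \<le> c" "i \<in> {1..n}" and F: "\<forall>x\<in>{1..n}. f x \<le> m"
  shows "f (wsort n f i) < m"
proof -
  consider (z) "c = 0 \<and> 0 < f (wsort n f 1)" | (l) "c = n \<and> f (wsort n f n) < m" |
    (mid) "0 < c \<and> c < n \<and> f (wsort n f c) + (if wsort n f (Suc c) < wsort n f c then 1 else 0)
        < f (wsort n f (Suc c))"
    using d unfolding defect_def by blast
  then show ?thesis
  proof cases
    case z
    then show ?thesis using assms by auto
  next
    case l then show ?thesis using a_mono[of i n n f] assms by auto
  next
    case mid
    have "f (wsort n f (Suc c)) \<le> m" using F wsort_in[of "Suc c" n f] mid by auto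
    then show ?thesis using a_mono[of i n c f] assms mid by auto
  qed
qed

lemma P3:
  assumes d: "defect n m f c" and "0 < c" "c < n"
  shows "f (wsort n f c) + (if wsort n f (Suc c) < wsort n f c then 1 else 0) < f (wsort n f (Suc c))"
  using assms unfolding defect_def by auto

lemma red_key:
  assumes d: "defect n m f c" and i: "i \<in> {1..n}" and j: "j \<in> {1..n}" and ij: "i < j"
  shows "keyf n (red n f c) (wsort n f i) < keyf n (red n f c) (wsort n f j)"
proof (rule keyf_lessI)
  let ?w = "wsort n f"
  let ?h = "red n f c"
  show "?w i \<le> n" "1 \<le> ?w j" using wsort_in[OF i, of f] wsort_in[OF j, of f] by auto
  have rel: "f (?w i) \<le> f (?w j) \<and> (f (?w i) = f (?w j) \<longrightarrow> ?w i < ?w j)"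
    using a_rel[OF i j ij] .
  have hi: "?h (?w i) = f (?w i) - (if c < i then 1 else 0)" using red_at[OF i] .
  have hj: "?h (?w j) = f (?w j) - (if c < j then 1 else 0)" using red_at[OF j] .
  show "?h (?w i) < ?h (?w j) \<or> (?h (?w i) = ?h (?w j) \<and> ?w i < ?w j)"
  proof (cases "c < i")
    case True
    have "1 \<le> f (?w i)" "1 \<le> f (?w j)" using P1[OF d True i] P1[OF d _ j] True ij by auto
    then show ?thesis using hi hj rel True ij by auto
  next
    case ci: False
    show ?thesis
    proof (cases "c < j")
      case False
      then show ?thesis using hi hj rel ci by auto
    next
      case cj: True
      have c0: "0 < c" "c < n" using ci i j cj by auto
      have mid: "f (?w c) + (if ?w (Suc c) < ?w c then 1 else 0) < f (?w (Suc c))"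
        using P3[OF d c0] .
      have c1: "c \<in> {1..n}" "Suc c \<in> {1..n}" using c0 by auto
      have m1: "f (?w i) \<le> f (?w c)" using a_mono[OF i c1(1)] ci by auto
      have m2: "f (?w (Suc c)) \<le> f (?w j)" using a_mono[OF c1(2) j] cj by auto
      show ?thesis
      proof (cases "f (?w i) + 1 < f (?w j)")
        case True
        then show ?thesis using hi hj ci cj by auto
      next
        case False
        have e2a: "\<not> ?w (Suc c) < ?w c"
        proof
          assume "?w (Suc c) < ?w c"
          then have "f (?w c) + 1 < f (?w (Suc c))" using mid by simp
          then show False using False m1 m2 by linarith
        qed
        then have mid': "f (?w c) < f (?w (Suc c))" using mid by simp
        have e1: "f (?w i) = f (?w c)" "f (?w (Suc c)) = f (?w j)"
          and e2: "\<not> ?w (Suc c) < ?w c" "f (?w j) = f (?w i) + 1"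
          using mid' m1 m2 False e2a by linarith+
        have "?w (Suc c) \<noteq> ?w c" using injD[OF wsort_inj[of n f], of "Suc c" c] by auto
        then have wc: "?w c < ?w (Suc c)" using e2(1) by simp
        have "?w i \<le> ?w c" using a_eq_le[OF i c1(1)] ci e1(1) by auto
        moreover have "?w (Suc c) \<le> ?w j" using a_eq_le[OF c1(2) j] cj e1(2) by auto
        ultimately have "?w i < ?w j" using wc by simp
        then show ?thesis using hi hj ci cj e2(2) by auto
      qed
    qed
  qed
qed

lemma red_wsort:
  assumes d: "defect n m f c"
  shows "wsort n (red n f c) = wsort n f"
proof (rule wsort_cong)
  fix x y assume x: "x \<in> {1..n}" and y: "y \<in> {1..n}"
  obtain i where i: "i \<in> {1..n}" "x = wsort n f i" using x wsort_image[of n f] by (metis imageE)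
  obtain j where j: "j \<in> {1..n}" "y = wsort n f j" using y wsort_image[of n f] by (metis imageE)
  consider "i < j" | "i = j" | "j < i" by linarith
  then show "(keyf n (red n f c) x \<le> keyf n (red n f c) y) = (keyf n f x \<le> keyf n f y)"
  proof cases
    case 1
    then show ?thesis using red_key[OF d i(1) j(1)] wsort_strict[OF i(1) j(1), of f] i j by simp
  next
    case 2 then show ?thesis using i j by simp
  next
    case 3
    then show ?thesis using red_key[OF d j(1) i(1)] wsort_strict[OF j(1) i(1), of f] i j by simp
  qed
qed

lemma red_range:
  assumes d: "defect n m f c" and x: "x \<in> {1..n}" and F: "\<forall>x\<in>{1..n}. f x \<le> m"
  shows "red n f c x < m"
proof -
  obtain i where i: "i \<in> {1..n}" "x = wsort n f i" using x wsort_image[of n f] by (metis imageE)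
  have fm: "f (wsort n f i) \<le> m" using F wsort_in[OF i(1), of f] by auto
  show ?thesis
  proof (cases "c < i")
    case True
    then show ?thesis using P1[OF d True i(1)] red_at[OF i(1), of f c] fm i(2) by auto
  next
    case False
    then show ?thesis using P2[OF d _ i(1) F] red_at[OF i(1), of f c] i(2) by auto
  qed
qed

lemma red_recover:
  assumes d: "defect n m f c" and x: "x \<in> {1..n}"
  shows "f x = red n f c x + (if x \<in> wsort n (red n f c) ` {Suc c..n} then 1 else 0)"
proof -
  have w: "wsort n (red n f c) = wsort n f" using red_wsort[OF d] .
  show ?thesis
  proof (cases "x \<in> wsort n f ` {Suc c..n}")
    case True
    then obtain i where i: "i \<in> {Suc c..n}" "x = wsort n f i" by blast
    have "1 \<le> f x" using P1[OF d, of i] i by auto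
    then show ?thesis using True w x by (simp add: red_def)
  next
    case False
    then show ?thesis using w x by (simp add: red_def)
  qed
qed

lemma count_main:
  assumes n1: "1 \<le> n"
  shows "(m+1)^n \<le> card {w. w permutes {1..n} \<and> card (descents_outside n w {}) = m} + (n+1) * m^n"
proof -
  define F where "F = PiE {1..n} (\<lambda>_. {..m})"
  define G where "G = {f\<in>F. \<forall>c\<le>n. \<not> defect n m f c}"
  define B where "B = {f\<in>F. \<exists>c\<le>n. defect n m f c}"
  define P where "P = {w. w permutes {1..n} \<and> card (descents_outside n w {}) = m}"
  define T where "T = {..n} \<times> PiE {1..n} (\<lambda>_. {..<m})"
  have finF: "finite F" unfolding F_def by (simp add: finite_PiE)
  have cardF: "card F = (m+1)^n" unfolding F_def by (simp add: card_PiE)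
  have FGB: "F = G \<union> B" "G \<inter> B = {}" unfolding G_def B_def by auto
  have cardGB: "card F = card G + card B"
    using FGB finF by (simp add: card_Un_disjoint)
  have Fm: "\<forall>x\<in>{1..n}. f x \<le> m" if "f \<in> F" for f using that unfolding F_def by auto
  have Fe: "f \<in> extensional {1..n}" if "f \<in> F" for f using that unfolding F_def by (simp add: PiE_iff)
  have finP: "finite P"
    unfolding P_def by (rule finite_subset[OF _ finite_permutations[of "{1..n}"]]) auto
  have "card G \<le> card P"
  proof (rule card_inj_on_le[of "wsort n"])
    show "inj_on (wsort n) G"
    proof (rule inj_onI)
      fix f g assume f: "f \<in> G" and g: "g \<in> G" and e: "wsort n f = wsort n g"
      show "f = g"
        by (rule good_inj[of n m f g]) (use f g e Fe in \<open>auto simp: G_def\<close>)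
    qed
    show "wsort n ` G \<subseteq> P"
    proof
      fix w assume "w \<in> wsort n ` G"
      then obtain f where f: "f \<in> G" "w = wsort n f" by blast
      have "card (descents_outside n (wsort n f) {}) = m"
        by (rule good_des[OF _ n1]) (use f Fm in \<open>auto simp: G_def\<close>)
      then show "w \<in> P" using f wsort_permutes unfolding P_def by auto
    qed
    show "finite P" by (rule finP)
  qed
  moreover have "card B \<le> card T"
  proof -
    define cf where "cf f = (LEAST c. c \<le> n \<and> defect n m f c)" for f
    have cfp: "cf f \<le> n \<and> defect n m f (cf f)" if "f \<in> B" for f
    proof -
      have "\<exists>c\<le>n. defect n m f c" using that by (simp add: B_def)
      then obtain c where "c \<le> n \<and> defect n m f c" by blast
      then show ?thesis unfolding cf_def by (rule LeastI)
    qed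
    define \<Psi> where "\<Psi> f = (cf f, red n f (cf f))" for f
    show ?thesis
    proof (rule card_inj_on_le[of \<Psi>])
      show "inj_on \<Psi> B"
      proof (rule inj_onI)
        fix f g assume f: "f \<in> B" and g: "g \<in> B" and e: "\<Psi> f = \<Psi> g"
        have c: "cf f = cf g" and h: "red n f (cf f) = red n g (cf g)" using e by (auto simp: \<Psi>_def)
        have df: "defect n m f (cf f)" and dg: "defect n m g (cf f)" using cfp[OF f] cfp[OF g] c by auto
        have fF: "f \<in> F" and gF: "g \<in> F" using f g by (auto simp: B_def)
        show "f = g"
        proof (rule extensionalityI[OF Fe[OF fF] Fe[OF gF]])
          fix x assume x: "x \<in> {1..n}"
          show "f x = g x"
            using red_recover[OF df x] red_recover[OF dg x] h c by simp
        qed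
      qed
      show "\<Psi> ` B \<subseteq> T"
      proof
        fix p assume "p \<in> \<Psi> ` B"
        then obtain f where f: "f \<in> B" "p = \<Psi> f" by blast
        have d: "defect n m f (cf f)" and cn: "cf f \<le> n" using cfp[OF f(1)] by auto
        have fF: "f \<in> F" using f by (auto simp: B_def)
        have "red n f (cf f) \<in> PiE {1..n} (\<lambda>_. {..<m})"
          using red_range[OF d _ Fm[OF fF]] by (auto simp: PiE_iff extensional_def red_def)
        then show "p \<in> T" using f cn by (auto simp: T_def \<Psi>_def)
      qed
      show "finite T" unfolding T_def by (simp add: finite_PiE)
    qed
  qed
  moreover have "card T = (n+1) * m^n" unfolding T_def by (simp add: card_PiE card_cartesian_product)
  ultimately show ?thesis using cardF cardGB unfolding P_def by simp
qed

lemma eul_ge: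
  assumes r1: "r \<ge> 1"
  shows "((k + r - 1) choose (r - 1)) * card {w. w permutes {1..n} \<and> card (descents_outside n w {}) = k + r - 1}
         \<le> eulerian_r r n k"
proof -
  define m where "m = k + r - 1"
  define P where "P = {w. w permutes {1..n} \<and> card (descents_outside n w {}) = m}"
  define Q where "Q = (\<lambda>w. {S. S \<subseteq> descents_outside n w {} \<and> card S = r - 1})"
  define E where "E = {(w, S). w permutes {1..n} \<and> S \<subseteq> {1..n-1} \<and> card S = r - 1
        \<and> card (descents_outside n w S) = k}"
  have finD: "finite (descents_outside n w S)" for w S
    by (rule finite_subset[of _ "{1..n-1}"]) (auto simp: descents_outside_def)
  have Dsub: "descents_outside n w {} \<subseteq> {1..n-1}" for w by (auto simp: descents_outside_def)
  have DS: "descents_outside n w S = descents_outside n w {} - S" for w S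
    by (auto simp: descents_outside_def)
  have finP: "finite P"
    unfolding P_def by (rule finite_subset[OF _ finite_permutations[of "{1..n}"]]) auto
  have finE: "finite E"
    by (rule finite_subset[of _ "{w. w permutes {1..n}} \<times> Pow {1..n-1}"])
       (auto simp: E_def finite_permutations)
  have sub: "Sigma P Q \<subseteq> E"
  proof
    fix p assume "p \<in> Sigma P Q"
    then obtain w S where p: "p = (w, S)" "w \<in> P" "S \<in> Q w" by blast
    have S: "S \<subseteq> descents_outside n w {}" "card S = r - 1" using p by (auto simp: Q_def)
    have cD: "card (descents_outside n w {}) = m" using p by (auto simp: P_def)
    have "card (descents_outside n w S) = card (descents_outside n w {}) - card S"
      unfolding DS[of w S] by (rule card_Diff_subset) (use S finite_subset[OF S(1) finD] in auto)
    also have "\<dots> = k" using cD S r1 by (simp add: m_def)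
    finally show "p \<in> E" using p S Dsub[of w] by (auto simp: E_def P_def)
  qed
  have "card (Sigma P Q) = (\<Sum>w\<in>P. card (Q w))"
  proof (rule card_SigmaI[OF finP], intro ballI)
    fix w show "finite (Q w)" unfolding Q_def
      by (rule finite_subset[of _ "Pow (descents_outside n w {})"]) (use finD[of w "{}"] in auto)
  qed
  also have "\<dots> = (\<Sum>w\<in>P. m choose (r - 1))"
  proof (rule sum.cong[OF refl])
    fix w assume "w \<in> P"
    then have "card (descents_outside n w {}) = m" by (simp add: P_def)
    then show "card (Q w) = m choose (r - 1)" unfolding Q_def using n_subsets[OF finD[of w "{}"], of "r-1"] by simp
  qed
  also have "\<dots> = (m choose (r - 1)) * card P" by simp
  finally have "card (Sigma P Q) = (m choose (r - 1)) * card P" .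
  moreover have "card (Sigma P Q) \<le> card E" by (rule card_mono[OF finE sub])
  ultimately show ?thesis unfolding eulerian_r_def E_def P_def m_def by simp
qed

theorem lemma2p8:
  fixes n r k :: nat
  assumes "n \<ge> 1" and "r \<ge> 1"
    and "(n \<ge> 3 * r^2 + 100 \<and> r \<ge> 2 \<and> k \<le> 4 * r)
         \<or> real k \<le> real n / (ln (real n + 1) + 1) - real r"
  shows "real (eulerian_r r n k) \<ge> 0.6 * real ((k + r - 1) choose (r - 1)) * real (k + r) ^ n"
proof -
  define m where "m = k + r - 1"
  define A where "A = card {w. w permutes {1..n} \<and> card (descents_outside n w {}) = m}"
  define C where "C = (k + r - 1) choose (r - 1)"
  have m1: "m + 1 = k + r" using assms(2) by (simp add: m_def)
  have L0: "ln (real n + 1) + 1 > 0" using assms(1) by (simp add: add_pos_nonneg)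
  have cond: "real (m+1) * (ln (real n + 1) + 1) \<le> real n"
    using assms(3)
  proof
    assume h: "n \<ge> 3 * r^2 + 100 \<and> r \<ge> 2 \<and> k \<le> 4 * r"
    have "real (m+1) \<le> 5 * real r" using h m1 by simp
    then have "real (m+1) * (ln (real n + 1) + 1) \<le> 5 * real r * (ln (real n + 1) + 1)"
      using L0 by (intro mult_right_mono) auto
    also have "\<dots> \<le> real n" using case1_bound[of r n] h by auto
    finally show ?thesis .
  next
    assume h: "real k \<le> real n / (ln (real n + 1) + 1) - real r"
    have "real (m+1) \<le> real n / (ln (real n + 1) + 1)" using h m1 by simp
    then show ?thesis using L0 by (simp add: field_simps)
  qed
  have an: "real (n+1) * real m ^ n \<le> 0.4 * real (m+1) ^ n"
    by (rule main_analytic[OF assms(1) cond])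
  have cm: "(m+1)^n \<le> A + (n+1) * m^n" unfolding A_def by (rule count_main[OF assms(1)])
  then have "real ((m+1)^n) \<le> real A + real ((n+1) * m^n)" by linarith
  then have "real (m+1)^n \<le> real A + real (n+1) * real m ^ n" by (simp only: of_nat_mult of_nat_power)
  then have A6: "0.6 * real (m+1)^n \<le> real A" using an by linarith
  have eg: "C * A \<le> eulerian_r r n k" unfolding C_def A_def m_def by (rule eul_ge[OF assms(2)])
  have "0.6 * real C * real (k + r) ^ n = real C * (0.6 * real (m+1)^n)" using m1 by simp
  also have "\<dots> \<le> real C * real A" using A6 by (intro mult_left_mono) auto
  also have "\<dots> \<le> real (eulerian_r r n k)" using eg by (metis of_nat_le_iff of_nat_mult)
  finally show ?thesis unfolding C_def .
qed

end
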